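(* Let $\lambda$ be Lebesgue measure on $[0,1]$ and let $T:[0,1]\to[0,1]$ be an invertible, ergodic, $\lambda$-preserving transformation which is rigid rank 1, with associated numbers $n_k$ and sets $A_k$ (as in the context). Let $\mathcal{R}_k=\bigcup_{i=0}^{n_k-1}T^iA_k$ and $\hat{\mathcal{R}}_k=\bigcup_{i=0}^{n_k-1}T^i\big(A_k\cap T^{-n_k}A_k\cap T^{n_k}A_k\big)$. Let $\sigma$ be a self-joining of $([0,1],T,\lambda)$ with disintegration $(\sigma_x)_{x\in[0,1]}$ over the projection to the first coordinate. Then for every $k$ and every $0\le j<n_k$, $$n_k\int_{T^jA_k}\sigma_x(\mathcal{R}_k^c)\,d\lambda(x)\le\lambda(\hat{\mathcal{R}}_k^c).$$
   Context: $T$ is called rigid rank 1 if there exist positive integers $n_j$ and measurable sets $A_j\subset[0,1]$ such that: (1) $\lim_{j\to\infty}\lambda\big(\bigcup_{i=0}^{n_j-1}T^iA_j\big)=1$; (2) the sets $A_j,TA_j,\dots,T^{n_j-1}A_j$ are pairwise disjoint; (3) $\lim_{j\to\infty}\lambda(T^{n_j}A_j\cap A_j)/\lambda(A_j)=1$; (4) for every $\varepsilon>0$ there exist, for each $j$, metric balls $B^{(j)}_0,\dots,B^{(j)}_{n_j-1}\subset[0,1]$ of diameter at most $\varepsilon$ such that $\lim_{j\to\infty}\sum_{i=0}^{n_j-1}\lambda(T^iA_j\setminus B^{(j)}_i)=0$. A self-joining of $([0,1],T,\lambda)$ is a $T\times T$-invariant Borel probability measure on $[0,1]\times[0,1]$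 both of whose marginals equal $\lambda$; $\sigma_x$ is regarded as a probability measure on $[0,1]$ by identifying $\{x\}\times[0,1]$ with $[0,1]$. Complements are taken in $[0,1]$. *)

theory Defs
  imports "HOL-Probability.Probability"
begin

abbreviation lam :: "real measure" where
  "lam \<equiv> restrict_space lborel {0..1}"

definition invertible_mpt :: "(real \<Rightarrow> real) \<Rightarrow> bool" where
  "invertible_mpt T \<longleftrightarrow>
     T \<in> measurable lam lam \<and> bij_betw T {0..1} {0..1} \<and>
     the_inv_into {0..1} T \<in> measurable lam lam \<and>
     distr lam lam T = lam"

definition ergodic :: "(real \<Rightarrow> real) \<Rightarrow> bool" where
  "ergodic T \<longleftrightarrow>
     (\<forall>E \<in> sets lam. T -` E \<inter> {0..1} = E \<longrightarrow> measure lam E = 0 \<or> measure lam E = 1)"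

definition rigid_rank_one_seq :: "(real \<Rightarrow> real) \<Rightarrow> (nat \<Rightarrow> nat) \<Rightarrow> (nat \<Rightarrow> real set) \<Rightarrow> bool" where
  "rigid_rank_one_seq T n A \<longleftrightarrow>
     (\<forall>j. 0 < n j \<and> A j \<in> sets lam) \<and>
     ((\<lambda>j. measure lam (\<Union>i<n j. (T ^^ i) ` A j)) \<longlonglongrightarrow> 1) \<and>
     (\<forall>j. disjoint_family_on (\<lambda>i. (T ^^ i) ` A j) {..<n j}) \<and>
     ((\<lambda>j. measure lam ((T ^^ n j) ` A j \<inter> A j) / measure lam (A j)) \<longlonglongrightarrow> 1) \<and>
     (\<forall>\<epsilon>>0. \<exists>B :: nat \<Rightarrow> nat \<Rightarrow> real set.
        (\<forall>j i. i < n j \<longrightarrow>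
           (\<exists>c r. c \<in> {0..1} \<and> B j i = ball c r \<inter> {0..1}) \<and> diameter (B j i) \<le> \<epsilon>) \<and>
        ((\<lambda>j. \<Sum>i<n j. measure lam ((T ^^ i) ` A j - B j i)) \<longlonglongrightarrow> 0))"

definition rigid_rank_one :: "(real \<Rightarrow> real) \<Rightarrow> bool" where
  "rigid_rank_one T \<longleftrightarrow> (\<exists>n A. rigid_rank_one_seq T n A)"

definition self_joining :: "(real \<Rightarrow> real) \<Rightarrow> (real \<times> real) measure \<Rightarrow> bool" where
  "self_joining T \<sigma> \<longleftrightarrow>
     sets \<sigma> = sets (lam \<Otimes>\<^sub>M lam) \<and> prob_space \<sigma> \<and>
     distr \<sigma> lam fst = lam \<and> distr \<sigma> lam snd = lam \<and>
     distr \<sigma> (lam \<Otimes>\<^sub>M lam) (\<lambda>p. (T (fst p), T (snd p))) = \<sigma>"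

definition disintegration :: "(real \<times> real) measure \<Rightarrow> (real \<Rightarrow> real measure) \<Rightarrow> bool" where
  "disintegration \<sigma> \<sigma>x \<longleftrightarrow>
     (\<forall>x \<in> {0..1}. prob_space (\<sigma>x x) \<and> sets (\<sigma>x x) = sets lam) \<and>
     (\<forall>F \<in> sets lam. (\<lambda>x. measure (\<sigma>x x) F) \<in> borel_measurable lam) \<and>
     (\<forall>E \<in> sets lam. \<forall>F \<in> sets lam.
        measure \<sigma> (E \<times> F) = (LINT x:E|lam. measure (\<sigma>x x) F))"

definition tower :: "(real \<Rightarrow> real) \<Rightarrow> nat \<Rightarrow> real set \<Rightarrow> real set" where
  "tower T m B = (\<Union>i<m. (T ^^ i) ` B)"

end

theory Submission
  imports Defs
begin

lemma space_lam: "space lam = {0..1}"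
  by (simp add: space_restrict_space)

lemma funpow_in:
  fixes T :: "real \<Rightarrow> real"
  assumes "T ` {0..1} \<subseteq> {0..1::real}" "x \<in> {0..1}"
  shows "(T ^^ k) x \<in> {0..1}"
  using assms by (induction k) (auto simp: image_subset_iff)

lemma funpow_inj:
  fixes T :: "real \<Rightarrow> real"
  assumes "inj_on T {0..1::real}" "T ` {0..1} \<subseteq> {0..1}"
  shows "inj_on (T ^^ k) {0..1}"
proof (induction k)
  case 0 then show ?case by (simp add: id_def)
next
  case (Suc k)
  have "(T ^^ k) ` {0..1} \<subseteq> {0..1}" using funpow_in[OF assms(2)] by auto
  then have "inj_on (T \<circ> (T ^^ k)) {0..1}"
    using Suc assms(1) by (meson comp_inj_on inj_on_subset)
  then show ?case by (simp add: comp_def)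
qed

lemma funpow_cancel:
  assumes "inj_on T {0..1::real}" "T ` {0..1} \<subseteq> {0..1}"
    and "z \<in> {0..1}" "w \<in> {0..1}" "b \<le> a" "(T ^^ a) z = (T ^^ b) w"
  shows "(T ^^ (a - b)) z = w"
proof -
  have "(T ^^ a) z = (T ^^ b) ((T ^^ (a - b)) z)"
    using assms(5) by (metis funpow_add le_add_diff_inverse o_apply)
  then show ?thesis
    using funpow_inj[OF assms(1,2), of b] funpow_in[OF assms(2)] assms(3,4,6)
    by (metis inj_onD)
qed

lemma funpow_meas:
  assumes "T \<in> measurable lam lam"
  shows "T ^^ k \<in> measurable lam lam"
proof (induction k)
  case 0 then show ?case by (simp add: id_def)
next
  case (Suc k) then show ?case using assms by (simp add: measurable_comp)
qed

lemma image_meas: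
  assumes "invertible_mpt T" "B \<in> sets lam"
  shows "(T ^^ k) ` B \<in> sets lam"
proof (induction k)
  case 0 then show ?case using assms by simp
next
  case (Suc k)
  define Ti where "Ti = the_inv_into {0..1} T"
  have bij: "bij_betw T {0..1} {0..1}" and Ti: "Ti \<in> measurable lam lam"
    using assms(1) unfolding invertible_mpt_def Ti_def by auto
  have sub: "(T ^^ k) ` B \<subseteq> {0..1}"
    using sets.sets_into_space[OF Suc] by (simp add: space_lam)
  have "T ` ((T ^^ k) ` B) = Ti -` ((T ^^ k) ` B) \<inter> space lam"
  proof
    show "T ` ((T ^^ k) ` B) \<subseteq> Ti -` ((T ^^ k) ` B) \<inter> space lam"
    proof
      fix y assume "y \<in> T ` ((T ^^ k) ` B)"
      then obtain b where b: "b \<in> (T ^^ k) ` B" "y = T b" by blast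
      then have "b \<in> {0..1}" using sub by auto
      then have "Ti y = b" "y \<in> {0..1}" using b bij unfolding Ti_def
        by (auto simp: bij_betw_def the_inv_into_f_f)
      then show "y \<in> Ti -` ((T ^^ k) ` B) \<inter> space lam" using b by (simp add: space_lam)
    qed
  next
    show "Ti -` ((T ^^ k) ` B) \<inter> space lam \<subseteq> T ` ((T ^^ k) ` B)"
    proof
      fix y assume y: "y \<in> Ti -` ((T ^^ k) ` B) \<inter> space lam"
      then have "T (Ti y) = y" using bij unfolding Ti_def
        by (auto simp: bij_betw_def space_lam f_the_inv_into_f)
      then show "y \<in> T ` ((T ^^ k) ` B)" using y by (metis IntD1 image_eqI vimageD)
    qed
  qed
  moreover have "Ti -` ((T ^^ k) ` B) \<inter> space lam \<in> sets lam"
    using Ti Suc by (rule measurable_sets)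
  ultimately show ?case by (simp add: image_comp)
qed


lemma funpow_split:
  fixes T :: "'a \<Rightarrow> 'a" and p q :: nat and x :: 'a
  shows "(T ^^ (p + q)) x = (T ^^ p) ((T ^^ q) x)"
  by (simp add: funpow_add)

lemma core:
  fixes T :: "real \<Rightarrow> real"
  assumes inj: "inj_on T {0..1}" and maps: "T ` {0..1} \<subseteq> {0..1}"
    and Ak: "Ak \<subseteq> {0..1}" and mN: "m < N" and lN: "l < N" and jN: "j < N"
    and w: "w \<in> Ak" "(T ^^ N) w \<in> Ak" "w = (T ^^ N) a" "a \<in> Ak"
    and z: "z \<in> {0..1}" "(T ^^ m) z = (T ^^ l) w"
  shows "\<exists>i<N. (T ^^ j) z \<in> (T ^^ i) ` Ak"
proof (cases "m \<le> l")
  case True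
  have wI: "w \<in> {0..1}" using w Ak by auto
  have zw: "(T ^^ (l - m)) w = z"
    using funpow_cancel[OF inj maps wI z(1) True] z(2) by simp
  have eq: "(T ^^ j) z = (T ^^ (j + (l - m))) w" using zw funpow_split by metis
  show ?thesis
  proof (cases "j + (l - m) < N")
    case True then show ?thesis using eq w(1) by blast
  next
    case False
    then have "(T ^^ j) z = (T ^^ (j + (l - m) - N)) ((T ^^ N) w)"
      using eq funpow_split[where T=T and p="j + (l - m) - N" and q=N and x=w] by simp
    moreover have "j + (l - m) - N < N" using jN lN by linarith
    ultimately show ?thesis using w(2) by blast
  qed
next
  case False
  have wI: "w \<in> {0..1}" and aI: "a \<in> {0..1}" using w Ak by auto
  have zw: "(T ^^ (m - l)) z = w"
    using funpow_cancel[OF inj maps z(1) wI, of l m] z(2) False by simp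
  have le: "m - l \<le> N" using mN by linarith
  have za: "(T ^^ (N - (m - l))) a = z"
    using funpow_cancel[OF inj maps aI z(1) le] zw w(3) by simp
  have eq: "(T ^^ j) z = (T ^^ (j + (N - (m - l)))) a" using za funpow_split by metis
  show ?thesis
  proof (cases "j + (N - (m - l)) < N")
    case True then show ?thesis using eq w(4) by blast
  next
    case False2: False
    then have "(T ^^ j) z = (T ^^ (j + (N - (m - l)) - N)) ((T ^^ N) a)"
      using eq funpow_split[where T=T and p="j + (N - (m - l)) - N" and q=N and x=a] by simp
    moreover have "j + (N - (m - l)) - N < N" using jN False by linarith
    ultimately show ?thesis using w(1,3) by blast
  qed
qed

lemma sj_iter:
  assumes sj: "self_joining T \<sigma>" and Tm: "T \<in> measurable lam lam"
  shows "distr \<sigma> (lam \<Otimes>\<^sub>M lam) (\<lambda>p. ((T ^^ k) (fst p), (T ^^ k) (snd p))) = \<sigma>"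
proof (induction k)
  case 0
  have "distr \<sigma> (lam \<Otimes>\<^sub>M lam) (\<lambda>p. p) = distr \<sigma> \<sigma> (\<lambda>p. p)"
    using sj unfolding self_joining_def by (intro distr_cong) auto
  also have "\<dots> = \<sigma>" by (rule distr_id)
  finally show ?case by simp
next
  case (Suc k)
  have sets: "sets \<sigma> = sets (lam \<Otimes>\<^sub>M lam)" using sj unfolding self_joining_def by simp
  let ?P = "\<lambda>k p. ((T ^^ k) (fst p), (T ^^ k) (snd p))"
  have mk: "?P k \<in> measurable (lam \<Otimes>\<^sub>M lam) (lam \<Otimes>\<^sub>M lam)"
    using funpow_meas[OF Tm, of k] by measurable
  then have mk': "?P k \<in> measurable \<sigma> (lam \<Otimes>\<^sub>M lam)"
    using measurable_cong_sets[OF sets refl[of "sets (lam \<Otimes>\<^sub>M lam)"]] by simp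
  have m1: "?P 1 \<in> measurable (lam \<Otimes>\<^sub>M lam) (lam \<Otimes>\<^sub>M lam)"
    using Tm by simp
  have "?P (Suc k) = ?P 1 \<circ> ?P k" by (auto simp: fun_eq_iff)
  then have "distr \<sigma> (lam \<Otimes>\<^sub>M lam) (?P (Suc k)) = distr (distr \<sigma> (lam \<Otimes>\<^sub>M lam) (?P k)) (lam \<Otimes>\<^sub>M lam) (?P 1)"
    using distr_distr[OF m1 mk'] by simp
  also have "\<dots> = distr \<sigma> (lam \<Otimes>\<^sub>M lam) (?P 1)" using Suc by simp
  also have "\<dots> = \<sigma>" using sj unfolding self_joining_def by simp
  finally show ?case .
qed


theorem mainTheorem3:
  fixes T :: "real \<Rightarrow> real" and n :: "nat \<Rightarrow> nat" and A :: "nat \<Rightarrow> real set"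
    and \<sigma> :: "(real \<times> real) measure" and \<sigma>x :: "real \<Rightarrow> real measure"
  assumes "invertible_mpt T" and "ergodic T"
    and "rigid_rank_one_seq T n A"
    and "self_joining T \<sigma>" and "disintegration \<sigma> \<sigma>x"
  shows "\<forall>k j. j < n k \<longrightarrow>
    real (n k) * (LINT x:((T ^^ j) ` A k)|lam. measure (\<sigma>x x) ({0..1} - tower T (n k) (A k)))
      \<le> measure lam ({0..1} - tower T (n k)
            (A k \<inter> ((T ^^ n k) -` A k \<inter> {0..1}) \<inter> (T ^^ n k) ` A k))"
proof (intro allI impI)
  fix k j assume jN: "j < n k"
  define N where "N = n k"
  define Ak where "Ak = A k"
  define I where "I = {0..1::real}"
  define M where "M = lam \<Otimes>\<^sub>M lam"
  have inv: "invertible_mpt T" by fact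
  have Tm: "T \<in> measurable lam lam" and bij: "bij_betw T I I"
    using assms(1) unfolding invertible_mpt_def I_def by auto
  have inj: "inj_on T {0..1}" and maps: "T ` {0..1} \<subseteq> {0..1}"
    using bij unfolding I_def bij_betw_def by auto
  have sj: "sets \<sigma> = sets M" "prob_space \<sigma>" "distr \<sigma> lam snd = lam"
    using assms(4) unfolding self_joining_def M_def by auto
  interpret P: prob_space \<sigma> by fact
  have spM: "space M = I \<times> I" unfolding M_def I_def by (simp add: space_pair_measure space_lam)
  have sps: "space \<sigma> = I \<times> I" using sets_eq_imp_space_eq[OF sj(1)] spM by simp
  have Akm: "Ak \<in> sets lam" using assms(3) unfolding rigid_rank_one_seq_def Ak_def by auto
  have AkI: "Ak \<subseteq> I" using sets.sets_into_space[OF Akm] by (simp add: space_lam I_def)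
  have disj: "disjoint_family_on (\<lambda>i. (T ^^ i) ` Ak) {..<N}"
    using assms(3) unfolding rigid_rank_one_seq_def Ak_def N_def by auto
  define R where "R = tower T N Ak"
  define Ah where "Ah = Ak \<inter> ((T ^^ N) -` Ak \<inter> {0..1}) \<inter> (T ^^ N) ` Ak"
  define Rh where "Rh = tower T N Ah"
  have Rm: "R \<in> sets lam" unfolding R_def tower_def
    using image_meas[OF inv Akm] by auto
  have pre: "(T ^^ N) -` Ak \<inter> {0..1} \<in> sets lam"
    using measurable_sets[OF funpow_meas[OF Tm] Akm] by (simp add: space_lam)
  have Ahm: "Ah \<in> sets lam" unfolding Ah_def
    using Akm pre image_meas[OF inv Akm, of N] by (meson sets.Int)
  have Rhm: "Rh \<in> sets lam" unfolding Rh_def tower_def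
    using image_meas[OF inv Ahm] by auto
  define E where "E = (T ^^ j) ` Ak"
  define F where "F = I - R"
  have Em: "E \<in> sets lam" unfolding E_def using image_meas[OF inv Akm] .
  have Fm: "F \<in> sets lam" unfolding F_def I_def
    using sets.compl_sets[OF Rm] by (simp add: space_lam)
  have step1: "(LINT x:E|lam. measure (\<sigma>x x) F) = measure \<sigma> (E \<times> F)"
    using assms(5) Em Fm unfolding disintegration_def by auto
  define P where "P = (T ^^ j) -` F \<inter> I"
  have Pm: "P \<in> sets lam" unfolding P_def I_def
    using measurable_sets[OF funpow_meas[OF Tm] Fm] by (simp add: space_lam)
  have PI: "P \<subseteq> I" unfolding P_def by auto
  let ?Phi = "\<lambda>k p. ((T ^^ k) (fst p), (T ^^ k) (snd p))"
  have inv_meas: "measure \<sigma> S = measure \<sigma> (?Phi m -` S \<inter> space \<sigma>)" if "S \<in> sets M" for S m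
  proof -
    have mk: "?Phi m \<in> measurable M M"
      unfolding M_def using funpow_meas[OF Tm, of m] by measurable
    then have mk': "?Phi m \<in> measurable \<sigma> M"
      using measurable_cong_sets[OF sj(1) refl[of "sets M"]] by simp
    have "measure \<sigma> S = measure (distr \<sigma> M (?Phi m)) S"
      using sj_iter[OF assms(4) Tm, of m] unfolding M_def by simp
    also have "\<dots> = measure \<sigma> (?Phi m -` S \<inter> space \<sigma>)"
      using measure_distr[OF mk' that] .
    finally show ?thesis .
  qed
  have injk: "inj_on (T ^^ m) I" for m using funpow_inj[OF inj maps] I_def by simp
  have ink: "x \<in> I \<Longrightarrow> (T ^^ m) x \<in> I" for x m using funpow_in[OF maps] I_def by simp
  have step2: "measure \<sigma> (E \<times> F) = measure \<sigma> (Ak \<times> P)"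
  proof -
    have "E \<times> F \<in> sets M" unfolding M_def using Em Fm by simp
    moreover have "?Phi j -` (E \<times> F) \<inter> space \<sigma> = Ak \<times> P"
    proof -
      have "x \<in> I \<Longrightarrow> (T ^^ j) x \<in> E \<longleftrightarrow> x \<in> Ak" for x
        unfolding E_def using injk[of j] AkI by (auto dest: inj_onD)
      then show ?thesis unfolding sps P_def using AkI by auto
    qed
    ultimately show ?thesis using inv_meas by metis
  qed
  define D where "D m = (T ^^ m) ` Ak \<times> (T ^^ m) ` P" for m
  have Dm: "D m \<in> sets M" for m unfolding D_def M_def
    using image_meas[OF inv Akm] image_meas[OF inv Pm] by simp
  have Dmeas: "measure \<sigma> (D m) = measure \<sigma> (Ak \<times> P)" for m
  proof -
    have "?Phi m -` D m \<inter> space \<sigma> = Ak \<times> P"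
    proof -
      have "x \<in> I \<Longrightarrow> (T ^^ m) x \<in> (T ^^ m) ` B \<longleftrightarrow> x \<in> B" if "B \<subseteq> I" for x B
        using injk[of m] that by (auto dest: inj_onD)
      then have h1: "x \<in> I \<Longrightarrow> (T ^^ m) x \<in> (T ^^ m) ` Ak \<longleftrightarrow> x \<in> Ak"
        and h2: "x \<in> I \<Longrightarrow> (T ^^ m) x \<in> (T ^^ m) ` P \<longleftrightarrow> x \<in> P" for x
        using AkI PI by auto
      have "?Phi m -` D m \<inter> space \<sigma> = {p. fst p \<in> I \<and> snd p \<in> I \<and>
          (T ^^ m) (fst p) \<in> (T ^^ m) ` Ak \<and> (T ^^ m) (snd p) \<in> (T ^^ m) ` P}"
      proof (rule set_eqI)
        fix p :: "real \<times> real"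
        obtain a b where p: "p = (a, b)" by fastforce
        show "p \<in> ?Phi m -` D m \<inter> space \<sigma> \<longleftrightarrow> p \<in> {p. fst p \<in> I \<and> snd p \<in> I \<and>
          (T ^^ m) (fst p) \<in> (T ^^ m) ` Ak \<and> (T ^^ m) (snd p) \<in> (T ^^ m) ` P}"
          unfolding p sps D_def by (simp only: vimage_eq Int_iff mem_Collect_eq fst_conv snd_conv mem_Times_iff) (rule iffI; (elim conjE)?; (intro conjI)?; assumption)
      qed
      also have "\<dots> = Ak \<times> P"
      proof (rule set_eqI)
        fix p :: "real \<times> real"
        obtain a b where p: "p = (a, b)" by fastforce
        show "p \<in> {p. fst p \<in> I \<and> snd p \<in> I \<and>
          (T ^^ m) (fst p) \<in> (T ^^ m) ` Ak \<and> (T ^^ m) (snd p) \<in> (T ^^ m) ` P} \<longleftrightarrow> p \<in> Ak \<times> P"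
          unfolding p using h1[of a] h2[of b] AkI PI by (auto simp del: image_iff)
      qed
      finally show ?thesis .
    qed
    then show ?thesis using inv_meas[OF Dm] by metis
  qed
  have Ddisj: "disjoint_family_on D {..<N}"
    using disj unfolding disjoint_family_on_def D_def by auto
  have Dsub: "(\<Union>m<N. D m) \<subseteq> I \<times> (I - Rh)"
  proof
    fix p assume "p \<in> (\<Union>m<N. D m)"
    then obtain m x y where m: "m < N" "p = (x, y)" "x \<in> (T ^^ m) ` Ak" "y \<in> (T ^^ m) ` P"
      unfolding D_def by auto
    have xI: "x \<in> I" using m(3) AkI ink by auto
    obtain z where z: "z \<in> P" "y = (T ^^ m) z" using m(4) by auto
    have zI: "z \<in> I" using z PI by auto
    have yI: "y \<in> I" using z zI ink by auto
    have "y \<notin> Rh"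
    proof
      assume "y \<in> Rh"
      then obtain l w where lw: "l < N" "w \<in> Ah" "y = (T ^^ l) w"
        unfolding Rh_def tower_def by auto
      obtain a where a: "a \<in> Ak" "w = (T ^^ N) a" using lw(2) unfolding Ah_def by auto
      have "\<exists>i<N. (T ^^ j) z \<in> (T ^^ i) ` Ak"
        using core[OF inj maps AkI[unfolded I_def] m(1) lw(1) jN[folded N_def], of w a z]
          lw a z zI unfolding Ah_def I_def by auto
      then have "(T ^^ j) z \<in> R" unfolding R_def tower_def by auto
      then show False using z(1) unfolding P_def F_def by auto
    qed
    then show "p \<in> I \<times> (I - Rh)" using m(2) xI yI by auto
  qed
  have last: "measure \<sigma> (I \<times> (I - Rh)) = measure lam (I - Rh)"
  proof -
    have sm: "snd \<in> measurable \<sigma> lam"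
      using measurable_cong_sets[OF sj(1) refl[of "sets lam"]] unfolding M_def by simp
    have IR: "I - Rh \<in> sets lam" unfolding I_def
      using sets.compl_sets[OF Rhm] by (simp add: space_lam)
    have "measure lam (I - Rh) = measure (distr \<sigma> lam snd) (I - Rh)" using sj(3) by simp
    also have "\<dots> = measure \<sigma> (snd -` (I - Rh) \<inter> space \<sigma>)" using measure_distr[OF sm IR] .
    also have "snd -` (I - Rh) \<inter> space \<sigma> = I \<times> (I - Rh)" unfolding sps by auto
    finally show ?thesis by simp
  qed
  have "real N * measure \<sigma> (Ak \<times> P) = (\<Sum>m<N. measure \<sigma> (D m))" using Dmeas by simp
  also have "\<dots> = measure \<sigma> (\<Union>m<N. D m)"
  proof -
    have "D ` {..<N} \<subseteq> sets \<sigma>" using Dm sj(1) by auto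
    then show ?thesis using P.finite_measure_finite_Union[of "{..<N}" D] Ddisj by simp
  qed
  also have "\<dots> \<le> measure \<sigma> (I \<times> (I - Rh))"
  proof (rule P.finite_measure_mono[OF Dsub])
    show "I \<times> (I - Rh) \<in> sets \<sigma>" unfolding sj(1) M_def I_def
      using sets.compl_sets[OF Rhm] sets.top[of lam] by (auto simp: space_lam intro!: pair_measureI)
  qed
  also have "\<dots> = measure lam (I - Rh)" by (rule last)
  finally have "real N * (LINT x:E|lam. measure (\<sigma>x x) F) \<le> measure lam (I - Rh)"
    using step1 step2 by simp
  then show "real (n k) * (LINT x:((T ^^ j) ` A k)|lam. measure (\<sigma>x x) ({0..1} - tower T (n k) (A k)))
      \<le> measure lam ({0..1} - tower T (n k)
            (A k \<inter> ((T ^^ n k) -` A k \<inter> {0..1}) \<inter> (T ^^ n k) ` A k))"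
    unfolding N_def E_def F_def I_def R_def Rh_def Ah_def Ak_def .
qed

end
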